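(* The functor $\mathbf F:\mathbf{PA}\to\mathbf{DRC}$, $P\mapsto\mathbb F(P)$, is a left adjoint to the forgetful functor $\mathbf P:\mathbf{DRC}\to\mathbf{PA}$, $S\mapsto\mathbf P(S)$, and $\mathbf{PA}$ is coreflective in $\mathbf{DRC}$.
   Context: Maps are written on the right and composed left to right. A projection algebra is a set $P$ with maps $\theta_p,\delta_p:P\to P$ ($p\in P$) such that for all $p,q$: $p\theta_p=p$, $p\delta_p=p$; $p\theta_{q\theta_p}=q\theta_p$, $p\delta_{q\delta_p}=q\delta_p$; $\theta_q\theta_{q\theta_p}=\theta_q\theta_p$, $\delta_q\delta_{q\delta_p}=\delta_q\delta_p$; $\theta_p\delta_p=\theta_p$, $\delta_p\theta_p=\delta_p$; $\theta_{p\delta_q}\theta_p=\theta_q\theta_p$, $\delta_{p\theta_q}\delta_p=\delta_q\delta_p$. A projection algebra morphism $\phi$ satisfies $(q\theta_p)\phi=(q\phi)\theta_{p\phi}$ and $(q\delta_p)\phi=(q\phi)\delta_{p\phi}$; $\mathbf{PA}$ is the category of projection algebras. Write $p\,\mathscr F\,q$ iff $p=q\delta_p$ and $q=p\theta_q$. A DRC-semigroup is $(S,\cdot,D,R)$, $(S,\cdot)$ a semigroup, $D,R:S\to S$ with, for all $a,b$: $D(a)a=a$, $aR(a)=a$; $D(ab)=D(aD(b))$, $R(ab)=R(R(a)b)$; $D(ab)=D(a)D(ab)D(a)$, $R(ab)=R(b)R(ab)R(b)$; $R(D(a))=D(a)$, $D(R(a))=R(a)$. $\mathbf{DRC}$ is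 the category of DRC-semigroups with maps preserving $\cdot,D,R$. The forgetful functor $\mathbf P$ sends $S$ to $\mathbf P(S)=\{D(a):a\in S\}$ with $q\theta_p=R(qp)$, $q\delta_p=D(pq)$, and a DRC-morphism to its restriction to projections. $\mathbb F(P)$ is the semigroup with presentation on generators $x_p$ ($p\in P$) and relations $x_p^2=x_p$, $x_px_q=x_px_{p\theta_q}$, $x_px_q=x_{q\delta_p}x_q$ ($p,q\in P$); $\overline w$ denotes the class of a word $w$. Every element equals $\overline{x_{p_1}\cdots x_{p_k}}$ for some $p_1\mathscr F p_2\mathscr F\cdots\mathscr F p_k$, and $p_1,p_k$ are determined by the element; $D$ and $R$ on $\mathbb F(P)$ are given by $D(\overline{x_{p_1}\cdots x_{p_k}})=\overline{x_{p_1}}$, $R(\overline{x_{p_1}\cdots x_{p_k}})=\overline{x_{p_k}}$, making $\mathbb F(P)$ a DRC-semigroup whose projection algebra is identified with $P$ via $p\leftrightarrow\overline{x_p}$. For a projection algebra morphism $\phi:P\to P'$, $\mathbf F(\phi):\mathbb F(P)\to\mathbb F(P')$ is the DRC-morphism $\overline w\mapsto\overline{w'}$ where $w'$ replaces each $x_p$ by $x_{p\phi}$. *)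

theory Defs
  imports Main
begin

text \<open>Maps are written on the right. We encode a projection algebra by a carrier
  set P and two binary operations th, de, where th x p stands for x theta_p and
  de x p stands for x delta_p.\<close>

definition proj_alg :: "'a set \<Rightarrow> ('a \<Rightarrow> 'a \<Rightarrow> 'a) \<Rightarrow> ('a \<Rightarrow> 'a \<Rightarrow> 'a) \<Rightarrow> bool" where
  "proj_alg P th de \<longleftrightarrow>
     (\<forall>x\<in>P. \<forall>p\<in>P. th x p \<in> P \<and> de x p \<in> P) \<and>
     (\<forall>p\<in>P. th p p = p \<and> de p p = p) \<and>
     (\<forall>p\<in>P. \<forall>q\<in>P. th p (th q p) = th q p \<and> de p (de q p) = de q p) \<and>
     (\<forall>p\<in>P. \<forall>q\<in>P. \<forall>x\<in>P. th (th x q) (th q p) = th (th x q) p) \<and>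
     (\<forall>p\<in>P. \<forall>q\<in>P. \<forall>x\<in>P. de (de x q) (de q p) = de (de x q) p) \<and>
     (\<forall>p\<in>P. \<forall>x\<in>P. de (th x p) p = th x p \<and> th (de x p) p = de x p) \<and>
     (\<forall>p\<in>P. \<forall>q\<in>P. \<forall>x\<in>P. th (th x (de p q)) p = th (th x q) p) \<and>
     (\<forall>p\<in>P. \<forall>q\<in>P. \<forall>x\<in>P. de (de x (th p q)) p = de (de x q) p)"

definition pa_morph ::
  "'a set \<Rightarrow> ('a \<Rightarrow> 'a \<Rightarrow> 'a) \<Rightarrow> ('a \<Rightarrow> 'a \<Rightarrow> 'a) \<Rightarrow>
   'b set \<Rightarrow> ('b \<Rightarrow> 'b \<Rightarrow> 'b) \<Rightarrow> ('b \<Rightarrow> 'b \<Rightarrow> 'b) \<Rightarrow> ('a \<Rightarrow> 'b) \<Rightarrow> bool" where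
  "pa_morph P th de P' th' de' f \<longleftrightarrow>
     (\<forall>p\<in>P. f p \<in> P') \<and>
     (\<forall>p\<in>P. \<forall>q\<in>P. f (th q p) = th' (f q) (f p) \<and> f (de q p) = de' (f q) (f p))"

definition drc :: "'b set \<Rightarrow> ('b \<Rightarrow> 'b \<Rightarrow> 'b) \<Rightarrow> ('b \<Rightarrow> 'b) \<Rightarrow> ('b \<Rightarrow> 'b) \<Rightarrow> bool" where
  "drc S m D R \<longleftrightarrow>
     (\<forall>a\<in>S. \<forall>b\<in>S. m a b \<in> S) \<and> (\<forall>a\<in>S. D a \<in> S \<and> R a \<in> S) \<and>
     (\<forall>a\<in>S. \<forall>b\<in>S. \<forall>c\<in>S. m (m a b) c = m a (m b c)) \<and>
     (\<forall>a\<in>S. m (D a) a = a \<and> m a (R a) = a) \<and>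
     (\<forall>a\<in>S. \<forall>b\<in>S. D (m a b) = D (m a (D b)) \<and> R (m a b) = R (m (R a) b)) \<and>
     (\<forall>a\<in>S. \<forall>b\<in>S. D (m a b) = m (m (D a) (D (m a b))) (D a) \<and>
                     R (m a b) = m (m (R b) (R (m a b))) (R b)) \<and>
     (\<forall>a\<in>S. R (D a) = D a \<and> D (R a) = R a)"

definition drc_morph ::
  "'b set \<Rightarrow> ('b \<Rightarrow> 'b \<Rightarrow> 'b) \<Rightarrow> ('b \<Rightarrow> 'b) \<Rightarrow> ('b \<Rightarrow> 'b) \<Rightarrow>
   'c set \<Rightarrow> ('c \<Rightarrow> 'c \<Rightarrow> 'c) \<Rightarrow> ('c \<Rightarrow> 'c) \<Rightarrow> ('c \<Rightarrow> 'c) \<Rightarrow> ('b \<Rightarrow> 'c) \<Rightarrow> bool" where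
  "drc_morph S m D R S' m' D' R' f \<longleftrightarrow>
     (\<forall>a\<in>S. f a \<in> S') \<and>
     (\<forall>a\<in>S. \<forall>b\<in>S. f (m a b) = m' (f a) (f b)) \<and>
     (\<forall>a\<in>S. f (D a) = D' (f a) \<and> f (R a) = R' (f a))"

text \<open>The forgetful functor: projections of S with q theta_p = R(qp), q delta_p = D(pq).\<close>

definition projs :: "'b set \<Rightarrow> ('b \<Rightarrow> 'b) \<Rightarrow> 'b set" where
  "projs S D = D ` S"

definition proj_th :: "('b \<Rightarrow> 'b \<Rightarrow> 'b) \<Rightarrow> ('b \<Rightarrow> 'b) \<Rightarrow> 'b \<Rightarrow> 'b \<Rightarrow> 'b" where
  "proj_th m R q p = R (m q p)"

definition proj_de :: "('b \<Rightarrow> 'b \<Rightarrow> 'b) \<Rightarrow> ('b \<Rightarrow> 'b) \<Rightarrow> 'b \<Rightarrow> 'b \<Rightarrow> 'b" where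
  "proj_de m D q p = D (m p q)"

text \<open>Words are nonempty lists over P; the letter p stands for the generator x_p.
  fcong is the congruence generated by the defining relations
  x_p x_p = x_p,  x_p x_q = x_p x_{p theta_q},  x_p x_q = x_{q delta_p} x_q.\<close>

inductive_set fcong :: "'a set \<Rightarrow> ('a \<Rightarrow> 'a \<Rightarrow> 'a) \<Rightarrow> ('a \<Rightarrow> 'a \<Rightarrow> 'a) \<Rightarrow> ('a list \<times> 'a list) set"
  for P th de where
  refl: "w \<in> lists P \<Longrightarrow> w \<noteq> [] \<Longrightarrow> (w, w) \<in> fcong P th de"
| sym: "(u, v) \<in> fcong P th de \<Longrightarrow> (v, u) \<in> fcong P th de"
| trans: "(u, v) \<in> fcong P th de \<Longrightarrow> (v, w) \<in> fcong P th de \<Longrightarrow> (u, w) \<in> fcong P th de"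
| idem: "u \<in> lists P \<Longrightarrow> v \<in> lists P \<Longrightarrow> p \<in> P \<Longrightarrow>
          (u @ [p, p] @ v, u @ [p] @ v) \<in> fcong P th de"
| rth: "u \<in> lists P \<Longrightarrow> v \<in> lists P \<Longrightarrow> p \<in> P \<Longrightarrow> q \<in> P \<Longrightarrow>
          (u @ [p, q] @ v, u @ [p, th p q] @ v) \<in> fcong P th de"
| rde: "u \<in> lists P \<Longrightarrow> v \<in> lists P \<Longrightarrow> p \<in> P \<Longrightarrow> q \<in> P \<Longrightarrow>
          (u @ [p, q] @ v, u @ [de q p, q] @ v) \<in> fcong P th de"

definition fwords :: "'a set \<Rightarrow> 'a list set" where
  "fwords P = {w. w \<in> lists P \<and> w \<noteq> []}"

definition fcarrier :: "'a set \<Rightarrow> ('a \<Rightarrow> 'a \<Rightarrow> 'a) \<Rightarrow> ('a \<Rightarrow> 'a \<Rightarrow> 'a) \<Rightarrow> 'a list set set" where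
  "fcarrier P th de = fwords P // fcong P th de"

definition fclass :: "'a set \<Rightarrow> ('a \<Rightarrow> 'a \<Rightarrow> 'a) \<Rightarrow> ('a \<Rightarrow> 'a \<Rightarrow> 'a) \<Rightarrow> 'a list \<Rightarrow> 'a list set" where
  "fclass P th de w = fcong P th de `` {w}"

definition fmult :: "'a set \<Rightarrow> ('a \<Rightarrow> 'a \<Rightarrow> 'a) \<Rightarrow> ('a \<Rightarrow> 'a \<Rightarrow> 'a) \<Rightarrow>
     'a list set \<Rightarrow> 'a list set \<Rightarrow> 'a list set" where
  "fmult P th de c1 c2 = fcong P th de `` {w1 @ w2 | w1 w2. w1 \<in> c1 \<and> w2 \<in> c2}"

definition frel :: "('a \<Rightarrow> 'a \<Rightarrow> 'a) \<Rightarrow> ('a \<Rightarrow> 'a \<Rightarrow> 'a) \<Rightarrow> 'a \<Rightarrow> 'a \<Rightarrow> bool" where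
  "frel th de p q \<longleftrightarrow> p = de q p \<and> q = th p q"

definition fchain :: "'a set \<Rightarrow> ('a \<Rightarrow> 'a \<Rightarrow> 'a) \<Rightarrow> ('a \<Rightarrow> 'a \<Rightarrow> 'a) \<Rightarrow> 'a list \<Rightarrow> bool" where
  "fchain P th de w \<longleftrightarrow> w \<in> fwords P \<and>
     (\<forall>i. Suc i < length w \<longrightarrow> frel th de (w ! i) (w ! Suc i))"

definition fD :: "'a set \<Rightarrow> ('a \<Rightarrow> 'a \<Rightarrow> 'a) \<Rightarrow> ('a \<Rightarrow> 'a \<Rightarrow> 'a) \<Rightarrow> 'a list set \<Rightarrow> 'a list set" where
  "fD P th de c = fclass P th de [THE p. \<exists>w\<in>c. fchain P th de w \<and> hd w = p]"

definition fR :: "'a set \<Rightarrow> ('a \<Rightarrow> 'a \<Rightarrow> 'a) \<Rightarrow> ('a \<Rightarrow> 'a \<Rightarrow> 'a) \<Rightarrow> 'a list set \<Rightarrow> 'a list set" where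
  "fR P th de c = fclass P th de [THE p. \<exists>w\<in>c. fchain P th de w \<and> last w = p]"

definition fmap :: "'b set \<Rightarrow> ('b \<Rightarrow> 'b \<Rightarrow> 'b) \<Rightarrow> ('b \<Rightarrow> 'b \<Rightarrow> 'b) \<Rightarrow> ('a \<Rightarrow> 'b) \<Rightarrow>
     'a list set \<Rightarrow> 'b list set" where
  "fmap P' th' de' f c = fcong P' th' de' `` (map f ` c)"

end

theory Submission
  imports Defs
begin


fun dw :: "('a \<Rightarrow> 'a \<Rightarrow> 'a) \<Rightarrow> 'a list \<Rightarrow> 'a" where
  "dw de [] = undefined" | "dw de [p] = p" | "dw de (p # q # v) = de (dw de (q # v)) p"

definition rw :: "('a \<Rightarrow> 'a \<Rightarrow> 'a) \<Rightarrow> 'a list \<Rightarrow> 'a" where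
  "rw th w = foldl th (hd w) (tl w)"

lemma dw_Cons: "v \<noteq> [] \<Longrightarrow> dw de (p # v) = de (dw de v) p"
  by (cases v) auto

lemma dw_app: "w \<noteq> [] \<Longrightarrow> dw de (u @ w) = foldr (\<lambda>p y. de y p) u (dw de w)"
  by (induction u) (auto simp: dw_Cons)

lemma rw_Cons[simp]: "rw th (p # v) = foldl th p v"
  by (simp add: rw_def)

lemma rw_app: "x \<noteq> [] \<Longrightarrow> rw th (x @ v) = foldl th (rw th x) v"
  by (cases x) (auto simp: rw_def)

lemma rw_snoc: "x \<noteq> [] \<Longrightarrow> rw th (x @ [q]) = th (rw th x) q"
  by (simp add: rw_app)


fun sfx :: "('a \<Rightarrow> 'a \<Rightarrow> 'a) \<Rightarrow> 'a list \<Rightarrow> 'a list" where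
  "sfx de [] = []" | "sfx de [p] = [p]"
| "sfx de (p # q # v) = de (hd (sfx de (q # v))) p # sfx de (q # v)"

fun sch :: "('a \<Rightarrow> 'a \<Rightarrow> 'a) \<Rightarrow> 'a list \<Rightarrow> bool" where
  "sch de [] = True" | "sch de [x] = True" | "sch de (x # y # v) = (de y x = x \<and> sch de (y # v))"

fun gch :: "('a \<Rightarrow> 'a \<Rightarrow> 'a) \<Rightarrow> 'a \<Rightarrow> 'a list \<Rightarrow> 'a list" where
  "gch th u [] = [u]" | "gch th u (s # ss) = u # gch th (th u s) ss"

fun fcr :: "('a \<Rightarrow> 'a \<Rightarrow> 'a) \<Rightarrow> ('a \<Rightarrow> 'a \<Rightarrow> 'a) \<Rightarrow> 'a list \<Rightarrow> bool" where
  "fcr th de [] = True" | "fcr th de [x] = True"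
| "fcr th de (x # y # v) = (frel th de x y \<and> fcr th de (y # v))"

lemma sfx_Cons: "v \<noteq> [] \<Longrightarrow> sfx de (p # v) = de (hd (sfx de v)) p # sfx de v"
  by (cases v) auto

lemma sfx_ne: "w \<noteq> [] \<Longrightarrow> sfx de w \<noteq> [] \<and> hd (sfx de w) = dw de w"
  by (induction de w rule: sfx.induct) auto

lemma gch_hd: "gch th u ss = u # tl (gch th u ss)"
  by (cases ss) auto

lemma fcr_iff: "fcr th de w \<longleftrightarrow> (\<forall>i. Suc i < length w \<longrightarrow> frel th de (w ! i) (w ! Suc i))"
proof (induction th de w rule: fcr.induct)
  case (3 th de x y v)
  show ?case
  proof
    assume "fcr th de (x # y # v)"
    then show "\<forall>i. Suc i < length (x # y # v) \<longrightarrow> frel th de ((x # y # v) ! i) ((x # y # v) ! Suc i)"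
      using 3 by (auto simp: nth_Cons split: nat.splits)
  next
    assume a: "\<forall>i. Suc i < length (x # y # v) \<longrightarrow> frel th de ((x # y # v) ! i) ((x # y # v) ! Suc i)"
    have "frel th de x y" using a[rule_format, of 0] by simp
    moreover have "\<forall>i. Suc i < length (y # v) \<longrightarrow> frel th de ((y # v) ! i) ((y # v) ! Suc i)"
      using a by (metis Suc_less_eq length_Cons nth_Cons_Suc)
    ultimately show "fcr th de (x # y # v)" using 3 by simp
  qed
qed auto

lemma fcr_dw: "fcr th de w \<Longrightarrow> w \<noteq> [] \<Longrightarrow> dw de w = hd w"
  by (induction th de w rule: fcr.induct) (auto simp: frel_def)

lemma fcr_rw: "fcr th de w \<Longrightarrow> w \<noteq> [] \<Longrightarrow> rw th w = last w"
proof (induction th de w rule: fcr.induct)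
  case (3 th de x y v)
  then have "th x y = y" by (simp add: frel_def)
  then show ?case using 3 by simp
qed auto

locale pa = fixes P th de assumes PA: "proj_alg P th de"
begin
lemma cl: "x\<in>P \<Longrightarrow> p\<in>P \<Longrightarrow> th x p \<in> P" "x\<in>P \<Longrightarrow> p\<in>P \<Longrightarrow> de x p \<in> P" using PA unfolding proj_alg_def by auto
lemma a1: "p\<in>P \<Longrightarrow> th p p = p" "p\<in>P \<Longrightarrow> de p p = p" using PA unfolding proj_alg_def by auto
lemma a2: "p\<in>P \<Longrightarrow> q\<in>P \<Longrightarrow> th p (th q p) = th q p" "p\<in>P \<Longrightarrow> q\<in>P \<Longrightarrow>de p (de q p) = de q p" using PA unfolding proj_alg_def by auto
lemma a3: "p\<in>P \<Longrightarrow> q\<in>P \<Longrightarrow> x\<in>P \<Longrightarrow> th (th x q) (th q p) = th (th x q) p" using PA unfolding proj_alg_def by auto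
lemma a4: "p\<in>P \<Longrightarrow> q\<in>P \<Longrightarrow> x\<in>P \<Longrightarrow> de (de x q) (de q p) = de (de x q) p" using PA unfolding proj_alg_def by auto
lemma a5: "p\<in>P \<Longrightarrow> x\<in>P \<Longrightarrow> de (th x p) p = th x p" "p\<in>P \<Longrightarrow> x\<in>P \<Longrightarrow> th (de x p) p = de x p" using PA unfolding proj_alg_def by auto
lemma a6: "p\<in>P \<Longrightarrow> q\<in>P \<Longrightarrow> x\<in>P \<Longrightarrow> th (th x (de p q)) p = th (th x q) p" using PA unfolding proj_alg_def by auto
lemma a7: "p\<in>P \<Longrightarrow> q\<in>P \<Longrightarrow> x\<in>P \<Longrightarrow> de (de x (th p q)) p = de (de x q) p" using PA unfolding proj_alg_def by auto

lemma dd: "p\<in>P \<Longrightarrow> x\<in>P \<Longrightarrow> de (de x p) p = de x p" by (metis a5 cl)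
lemma tt: "p\<in>P \<Longrightarrow> x\<in>P \<Longrightarrow> th (th x p) p = th x p" by (metis a5 cl)
lemma tth: "p\<in>P \<Longrightarrow> q\<in>P \<Longrightarrow> th p (th p q) = th p q" by (metis a1(1) a3)
lemma dde: "p\<in>P \<Longrightarrow> q\<in>P \<Longrightarrow> de q (de q p) = de q p" by (metis a1(2) a4)
lemma LC': "y\<in>P \<Longrightarrow> z\<in>P \<Longrightarrow> q\<in>P \<Longrightarrow> th y z = y \<Longrightarrow> th (th y q) (th z q) = th y q"
  by (metis a3 cl(1) tt)
lemma L1: "p\<in>P \<Longrightarrow> q\<in>P \<Longrightarrow> th (de q p) q = th p q" by (metis a1(1) a2(1) a5(2) a6 cl(2))
lemma L2: "p\<in>P \<Longrightarrow> q\<in>P \<Longrightarrow> de (th p q) p = de q p" by (metis a1(2) a2(2) a5(1) a7 cl(1))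
lemma LA: "u\<in>P \<Longrightarrow> s\<in>P \<Longrightarrow> de s u = u \<Longrightarrow> de (th u s) u = u"
  by (metis a1(2) a2(2) a5(1) a7 cl(1))
lemma LB: "u\<in>P \<Longrightarrow> s\<in>P \<Longrightarrow> t\<in>P \<Longrightarrow> de s u = u \<Longrightarrow> de t s = s \<Longrightarrow> de t (th u s) = th u s"
  by (smt (verit) a2(2) a5(1) a7 cl(1) dd tt)
lemma LC: "y\<in>P \<Longrightarrow> z\<in>P \<Longrightarrow> p\<in>P \<Longrightarrow> de y z = y \<Longrightarrow> de (de y p) (de z p) = de y p"
  by (smt (verit) cl(2) dd a4)

lemma fc_words: "(u,v) \<in> fcong P th de \<Longrightarrow> u \<in> fwords P \<and> v \<in> fwords P"
  by (induction rule: fcong.induct) (auto simp: fwords_def cl)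

lemma fc_app: "(u,v) \<in> fcong P th de \<Longrightarrow> w \<in> lists P \<Longrightarrow>
   (w @ u, w @ v) \<in> fcong P th de \<and> (u @ w, v @ w) \<in> fcong P th de"
proof (induction rule: fcong.induct)
  case (refl w') then show ?case by (auto intro!: fcong.refl)
next
  case (sym u v) then show ?case by (auto intro: fcong.sym)
next
  case (trans u v w') then show ?case by (auto intro: fcong.trans)
next
  case (idem u v p) then show ?case
    using fcong.idem[of "w@u" P v p] fcong.idem[of u P "v@w" p] by auto
next
  case (rth u v p q) then show ?case
    using fcong.rth[of "w@u" P v p q] fcong.rth[of u P "v@w" p q] by auto
next
  case (rde u v p q) then show ?case
    using fcong.rde[of "w@u" P v p q] fcong.rde[of u P "v@w" p q] by auto
qed

lemma fc_app2: "(u,u') \<in> fcong P th de \<Longrightarrow> (v,v') \<in> fcong P th de \<Longrightarrow> (u @ v, u' @ v') \<in> fcong P th de"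
proof -
  assume a: "(u,u') \<in> fcong P th de" "(v,v') \<in> fcong P th de"
  then have w: "u \<in> fwords P" "u' \<in> fwords P" "v \<in> fwords P" "v' \<in> fwords P" using fc_words by auto
  have "(u @ v, u' @ v) \<in> fcong P th de" using fc_app[OF a(1)] w by (auto simp: fwords_def)
  moreover have "(u' @ v, u' @ v') \<in> fcong P th de" using fc_app[OF a(2)] w by (auto simp: fwords_def)
  ultimately show ?thesis by (rule fcong.trans)
qed

lemma dw_in: "w \<in> lists P \<Longrightarrow> w \<noteq> [] \<Longrightarrow> dw de w \<in> P"
  proof (induction w)
  case (Cons a w) thus ?case by (cases "w = []") (auto simp: cl dw_Cons)
qed simp

lemma rw_in_aux: "w \<in> lists P \<Longrightarrow> x \<in> P \<Longrightarrow> foldl th x w \<in> P"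
  by (induction w arbitrary: x) (auto simp: cl)

lemma rw_in: "w \<in> lists P \<Longrightarrow> w \<noteq> [] \<Longrightarrow> rw th w \<in> P"
  by (cases w) (auto simp: rw_in_aux)

lemma dw_loc: assumes "u \<in> lists P" "x \<in> lists P" "y \<in> lists P" "x \<noteq> []" "y \<noteq> []" "v \<in> lists P"
  and "\<And>z. z \<in> P \<Longrightarrow> dw de (x @ [z]) = dw de (y @ [z])" and "dw de x = dw de y"
  shows "dw de (u @ x @ v) = dw de (u @ y @ v)"
proof (cases v)
  case Nil then show ?thesis using assms by (simp add: dw_app)
next
  case (Cons a list)
  then have "dw de (x @ v) = dw de (y @ v)"
    using assms dw_app[of v de x] dw_app[of v de y] dw_app[of "[dw de v]" de x] dw_app[of "[dw de v]" de y]
      dw_in[of v] by simp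
  then show ?thesis using assms dw_app[of "x @ v" de u] dw_app[of "y @ v" de u] by simp
qed

lemma rw_loc: assumes "u \<in> lists P" "x \<in> lists P" "y \<in> lists P" "x \<noteq> []" "y \<noteq> []" "v \<in> lists P"
  and "\<And>z. z \<in> P \<Longrightarrow> rw th (z # x) = rw th (z # y)" and "rw th x = rw th y"
  shows "rw th (u @ x @ v) = rw th (u @ y @ v)"
proof (cases u rule: rev_cases)
  case Nil then show ?thesis using assms by (simp add: rw_app)
next
  case (snoc ys z)
  then have "rw th (u @ x) = rw th (u @ y)"
    using assms rw_app[of u th x] rw_app[of u th y] rw_app[of "[rw th u]" th x] rw_app[of "[rw th u]" th y]
      rw_in[of u] by simp
  then show ?thesis using assms rw_app[of "u @ x" th v] rw_app[of "u @ y" th v] snoc by simp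
qed


lemma dw_inv: "(u,v) \<in> fcong P th de \<Longrightarrow> dw de u = dw de v"
proof (induction rule: fcong.induct)
  case (idem u v p) then show ?case by (intro dw_loc) (auto simp: dd a1)
next
  case (rth u v p q) then show ?case by (intro dw_loc) (auto simp: a7 L2 cl)
next
  case (rde u v p q) then show ?case by (intro dw_loc) (auto simp: a4 dde cl)
qed auto

lemma rw_inv: "(u,v) \<in> fcong P th de \<Longrightarrow> rw th u = rw th v"
proof (induction rule: fcong.induct)
  case (idem u v p) then show ?case by (intro rw_loc) (auto simp: tt a1)
next
  case (rth u v p q) then show ?case by (intro rw_loc) (auto simp: a3 tth cl)
next
  case (rde u v p q) then show ?case by (intro rw_loc) (auto simp: a6 L1 cl)
qed auto


lemma sfx_lists: "w \<in> lists P \<Longrightarrow> sfx de w \<in> lists P"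
proof (induction w)
  case (Cons a v) thus ?case
    using sfx_ne[of v de] dw_in[of v] by (cases "v = []") (auto simp: sfx_Cons cl)
qed simp

lemma sfx_equiv: "w \<in> fwords P \<Longrightarrow> (w, sfx de w) \<in> fcong P th de"
proof (induction w)
  case (Cons a v)
  show ?case
  proof (cases "v = []")
    case True then show ?thesis using Cons by (auto simp: fwords_def intro: fcong.refl)
  next
    case False
    then have v: "v \<in> fwords P" "a \<in> P" using Cons by (auto simp: fwords_def)
    have 1: "(a # v, a # sfx de v) \<in> fcong P th de" using fc_app[OF Cons.IH[OF v(1)], of "[a]"] v by auto
    obtain s rest where sr: "sfx de v = s # rest" using sfx_ne[OF False] by (cases "sfx de v") auto
    have "sfx de v \<in> lists P" using sfx_lists v by (auto simp: fwords_def)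
    then have "([] @ [a, s] @ rest, [] @ [de s a, s] @ rest) \<in> fcong P th de"
      using sr v by (intro fcong.rde) auto
    then have "(a # sfx de v, sfx de (a # v)) \<in> fcong P th de" using sr False by (simp add: sfx_Cons)
    with 1 show ?thesis by (rule fcong.trans)
  qed
qed (simp add: fwords_def)

lemma sch_sfx: "w \<in> lists P \<Longrightarrow> sch de (sfx de w)"
proof (induction w)
  case (Cons a v)
  show ?case
  proof (cases "v = []")
    case False
    obtain s rest where sr: "sfx de v = s # rest" using sfx_ne[OF False] by (cases "sfx de v") auto
    have "s \<in> P" using sfx_lists[of v] sr Cons by auto
    then show ?thesis using Cons sr False by (auto simp: sfx_Cons dde)
  qed simp
qed simp

lemma gch_equiv: "u \<in> P \<Longrightarrow> ss \<in> lists P \<Longrightarrow> (u # ss, gch th u ss) \<in> fcong P th de"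
proof (induction ss arbitrary: u)
  case Nil then show ?case by (auto intro: fcong.refl)
next
  case (Cons s ss)
  have "([] @ [u, s] @ ss, [] @ [u, th u s] @ ss) \<in> fcong P th de" using Cons by (intro fcong.rth) auto
  moreover have "(u # th u s # ss, u # gch th (th u s) ss) \<in> fcong P th de"
    using fc_app[OF Cons.IH[of "th u s"], of "[u]"] Cons by (auto simp: cl)
  ultimately show ?case by (auto intro: fcong.trans)
qed

lemma gch_chain: "u \<in> P \<Longrightarrow> ss \<in> lists P \<Longrightarrow> sch de ss \<Longrightarrow> (ss \<noteq> [] \<longrightarrow> de (hd ss) u = u) \<Longrightarrow>
   fcr th de (gch th u ss)"
proof (induction ss arbitrary: u)
  case (Cons s ss)
  have sch: "sch de ss" using Cons.prems(3) by (cases ss) auto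
  have h: "ss \<noteq> [] \<longrightarrow> de (hd ss) (th u s) = th u s"
  proof
    assume "ss \<noteq> []"
    then obtain t r where "ss = t # r" by (cases ss) auto
    then show "de (hd ss) (th u s) = th u s" using Cons.prems by (auto intro!: LB)
  qed
  have IH: "fcr th de (gch th (th u s) ss)" using Cons.IH[of "th u s"] Cons.prems sch h by (auto simp: cl)
  have fr: "frel th de u (th u s)" using Cons.prems by (auto simp: frel_def LA tth)
  show ?case using IH fr gch_hd[of th "th u s" ss] by (metis fcr.simps(3) gch.simps(2))
qed simp

lemma chain_exists: "w \<in> fwords P \<Longrightarrow> \<exists>c. (w, c) \<in> fcong P th de \<and> fcr th de c"
proof -
  assume w: "w \<in> fwords P"
  obtain h t where ht: "sfx de w = h # t" using sfx_ne[of w de] w by (cases "sfx de w") (auto simp: fwords_def)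
  have l: "h \<in> P" "t \<in> lists P" using sfx_lists[of w] w ht by (auto simp: fwords_def)
  have s: "sch de (h # t)" using sch_sfx[of w] w ht by (auto simp: fwords_def)
  have "(w, gch th h t) \<in> fcong P th de" using sfx_equiv[OF w] gch_equiv[OF l] ht by (auto intro: fcong.trans)
  moreover have "fcr th de (gch th h t)"
  proof (rule gch_chain[OF l])
    show "sch de t" using s by (cases t) auto
    show "t \<noteq> [] \<longrightarrow> de (hd t) h = h" using s by (cases t) auto
  qed
  ultimately show ?thesis by blast
qed

lemma class_mem: "c \<in> fclass P th de w \<longleftrightarrow> (w, c) \<in> fcong P th de"
  by (simp add: fclass_def)

lemma fD_class: assumes w: "w \<in> fwords P" shows "fD P th de (fclass P th de w) = fclass P th de [dw de w]"
proof -
  obtain c where c: "(w, c) \<in> fcong P th de" "fcr th de c" using chain_exists[OF w] by blast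
  have cw: "c \<in> fwords P" using fc_words[OF c(1)] by simp
  have "(THE p. \<exists>w'\<in>fclass P th de w. fchain P th de w' \<and> hd w' = p) = dw de w"
  proof (rule the_equality)
    show "\<exists>w'\<in>fclass P th de w. fchain P th de w' \<and> hd w' = dw de w"
      using c cw fcr_dw[of th de c] dw_inv[OF c(1)] by (auto simp: class_mem fchain_def fcr_iff[symmetric] fwords_def)
  next
    fix p assume "\<exists>w'\<in>fclass P th de w. fchain P th de w' \<and> hd w' = p"
    then obtain w' where "(w, w') \<in> fcong P th de" "fchain P th de w'" "hd w' = p" by (auto simp: class_mem)
    then show "p = dw de w" using fcr_dw[of th de w'] dw_inv[of w w']
      by (auto simp: fchain_def fcr_iff[symmetric] fwords_def)
  qed
  then show ?thesis by (simp add: fD_def)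
qed

lemma fR_class: assumes w: "w \<in> fwords P" shows "fR P th de (fclass P th de w) = fclass P th de [rw th w]"
proof -
  obtain c where c: "(w, c) \<in> fcong P th de" "fcr th de c" using chain_exists[OF w] by blast
  have cw: "c \<in> fwords P" using fc_words[OF c(1)] by simp
  have "(THE p. \<exists>w'\<in>fclass P th de w. fchain P th de w' \<and> last w' = p) = rw th w"
  proof (rule the_equality)
    show "\<exists>w'\<in>fclass P th de w. fchain P th de w' \<and> last w' = rw th w"
      using c cw fcr_rw[of th de c] rw_inv[OF c(1)] by (auto simp: class_mem fchain_def fcr_iff[symmetric] fwords_def)
  next
    fix p assume "\<exists>w'\<in>fclass P th de w. fchain P th de w' \<and> last w' = p"
    then obtain w' where "(w, w') \<in> fcong P th de" "fchain P th de w'" "last w' = p" by (auto simp: class_mem)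
    then show "p = rw th w" using fcr_rw[of th de w'] rw_inv[of w w']
      by (auto simp: fchain_def fcr_iff[symmetric] fwords_def)
  qed
  then show ?thesis by (simp add: fR_def)
qed


lemma class_refl: "w \<in> fwords P \<Longrightarrow> w \<in> fclass P th de w"
  by (auto simp: class_mem fwords_def intro: fcong.refl)

lemma class_eq: "(u, v) \<in> fcong P th de \<Longrightarrow> fclass P th de u = fclass P th de v"
  unfolding fclass_def by (auto intro: fcong.trans fcong.sym)

lemma fcarrier_iff: "c \<in> fcarrier P th de \<longleftrightarrow> (\<exists>w\<in>fwords P. c = fclass P th de w)"
  by (auto simp: fcarrier_def quotient_def fclass_def)

lemma class_in: "w \<in> fwords P \<Longrightarrow> fclass P th de w \<in> fcarrier P th de"
  using fcarrier_iff by blast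

lemma fwords_app: "u \<in> fwords P \<Longrightarrow> v \<in> fwords P \<Longrightarrow> u @ v \<in> fwords P"
  by (auto simp: fwords_def)

lemma fmult_class: assumes "u \<in> fwords P" "v \<in> fwords P"
  shows "fmult P th de (fclass P th de u) (fclass P th de v) = fclass P th de (u @ v)"
proof
  show "fmult P th de (fclass P th de u) (fclass P th de v) \<subseteq> fclass P th de (u @ v)"
  proof
    fix x assume "x \<in> fmult P th de (fclass P th de u) (fclass P th de v)"
    then obtain w1 w2 where "(u, w1) \<in> fcong P th de" "(v, w2) \<in> fcong P th de" "(w1 @ w2, x) \<in> fcong P th de"
      by (auto simp: fmult_def class_mem)
    then show "x \<in> fclass P th de (u @ v)" by (auto simp: class_mem intro: fcong.trans fc_app2)
  qed
next
  show "fclass P th de (u @ v) \<subseteq> fmult P th de (fclass P th de u) (fclass P th de v)"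
  proof
    fix x assume "x \<in> fclass P th de (u @ v)"
    then have 1: "(u @ v, x) \<in> fcong P th de" by (simp add: class_mem)
    have "u @ v \<in> {w1 @ w2 |w1 w2. w1 \<in> fclass P th de u \<and> w2 \<in> fclass P th de v}"
      using class_refl assms by blast
    with 1 show "x \<in> fmult P th de (fclass P th de u) (fclass P th de v)" unfolding fmult_def by blast
  qed
qed

lemma dw_absorb: "w \<in> fwords P \<Longrightarrow> (dw de w # w, w) \<in> fcong P th de"
proof (induction w)
  case (Cons a v)
  show ?case
  proof (cases "v = []")
    case True then show ?thesis using Cons fcong.idem[of "[]" P "[]" a] by (auto simp: fwords_def)
  next
    case False
    have v: "v \<in> fwords P" "a \<in> P" using Cons False by (auto simp: fwords_def)
    define x where "x = dw de v"
    define y where "y = de x a"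
    have xP: "x \<in> P" "y \<in> P" using dw_in v by (auto simp: x_def y_def fwords_def cl)
    have vl: "v \<in> lists P" using v by (auto simp: fwords_def)
    have IH: "(x # v, v) \<in> fcong P th de" using Cons.IH[OF v(1)] x_def by simp
    have 1: "(a # v, a # x # v) \<in> fcong P th de" using fc_app[OF fcong.sym[OF IH], of "[a]"] v by auto
    have 2: "(a # x # v, y # x # v) \<in> fcong P th de" using fcong.rde[of "[]" P v a x] vl xP v y_def by auto
    have 3: "(y # x # v, y # y # x # v) \<in> fcong P th de" using fcong.sym[OF fcong.idem[of "[]" P "x # v" y]] vl xP by auto
    have 4: "(y # y # x # v, y # a # x # v) \<in> fcong P th de"
      using fcong.sym[OF fcong.rde[of "[y]" P v a x]] vl xP v y_def by auto
    have 5: "(y # a # x # v, y # a # v) \<in> fcong P th de" using fc_app[OF IH, of "[y, a]"] v xP by auto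
    have "(a # v, y # a # v) \<in> fcong P th de" using 1 2 3 4 5 by (meson fcong.trans)
    moreover have "dw de (a # v) = y" using False by (simp add: dw_Cons x_def y_def)
    ultimately show ?thesis by (auto intro: fcong.sym)
  qed
qed (simp add: fwords_def)

lemma rw_absorb: "w \<in> fwords P \<Longrightarrow> (w @ [rw th w], w) \<in> fcong P th de"
proof (induction w rule: rev_induct)
  case (snoc a v)
  show ?case
  proof (cases "v = []")
    case True then show ?thesis using snoc fcong.idem[of "[]" P "[]" a] by (auto simp: fwords_def)
  next
    case False
    have v: "v \<in> fwords P" "a \<in> P" using snoc False by (auto simp: fwords_def)
    define x where "x = rw th v"
    define y where "y = th x a"
    have xP: "x \<in> P" "y \<in> P" using rw_in v by (auto simp: x_def y_def fwords_def cl)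
    have vl: "v \<in> lists P" using v by (auto simp: fwords_def)
    have IH: "(v @ [x], v) \<in> fcong P th de" using snoc.IH[OF v(1)] x_def by simp
    have 1: "(v @ [a], v @ [x, a]) \<in> fcong P th de" using fc_app[OF fcong.sym[OF IH], of "[a]"] v by auto
    have 2: "(v @ [x, a], v @ [x, y]) \<in> fcong P th de" using fcong.rth[of v P "[]" x a] vl xP v y_def by auto
    have 3: "(v @ [x, y], v @ [x, y, y]) \<in> fcong P th de" using fcong.sym[OF fcong.idem[of "v @ [x]" P "[]" y]] vl xP by auto
    have 4: "(v @ [x, y, y], v @ [x, a, y]) \<in> fcong P th de"
      using fcong.sym[OF fcong.rth[of v P "[y]" x a]] vl xP v y_def by auto
    have 5: "(v @ [x, a, y], v @ [a, y]) \<in> fcong P th de" using fc_app[OF IH, of "[a, y]"] v xP by auto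
    have "(v @ [a], v @ [a, y]) \<in> fcong P th de" using 1 2 3 4 5 by (meson fcong.trans)
    moreover have "rw th (v @ [a]) = y" using False by (simp add: rw_snoc x_def y_def)
    ultimately show ?thesis by (auto intro: fcong.sym)
  qed
qed (simp add: fwords_def)

lemma sandwich: assumes "x \<in> P" "z \<in> P" "de x z = x"
  shows "([z, x, z], [x]) \<in> fcong P th de"
proof -
  have t: "th x z = x" using assms a5(2) by metis
  have 1: "([z, x, z], [x, x, z]) \<in> fcong P th de" using fcong.rde[of "[]" P "[z]" z x, where th=th and de=de] assms by auto
  have 2: "([x, x, z], [x, z]) \<in> fcong P th de" using fcong.idem[of "[]" P "[z]" x] assms by auto
  have 3: "([x, z], [x, x]) \<in> fcong P th de" using fcong.rth[of "[]" P "[]" x z, where th=th and de=de] assms t by auto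
  have 4: "([x, x], [x]) \<in> fcong P th de" using fcong.idem[of "[]" P "[]" x] assms by auto
  show ?thesis using 1 2 3 4 by (meson fcong.trans)
qed

lemma dw_le: "u \<in> fwords P \<Longrightarrow> v \<in> fwords P \<Longrightarrow> de (dw de (u @ v)) (dw de u) = dw de (u @ v)"
proof (induction u)
  case (Cons p u')
  have vP: "dw de v \<in> P" "p \<in> P" using Cons dw_in by (auto simp: fwords_def)
  show ?case
  proof (cases "u' = []")
    case True then show ?thesis using Cons vP by (simp add: dw_Cons dd fwords_def)
  next
    case False
    have u': "u' \<in> fwords P" using Cons False by (auto simp: fwords_def)
    have i: "dw de (u' @ v) \<in> P" "dw de u' \<in> P" using dw_in u' Cons by (auto simp: fwords_def)
    show ?thesis using Cons.IH[OF u' Cons.prems(2)] False i vP Cons.prems(2)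
      by (simp add: dw_Cons LC fwords_def)
  qed
qed (simp add: fwords_def)


lemma rw_le: "v \<in> fwords P \<Longrightarrow> u \<in> fwords P \<Longrightarrow> th (rw th (u @ v)) (rw th v) = rw th (u @ v)"
proof (induction v rule: rev_induct)
  case (snoc q v')
  have uP: "rw th u \<in> P" "q \<in> P" using snoc rw_in by (auto simp: fwords_def)
  show ?case
  proof (cases "v' = []")
    case True then show ?thesis using snoc uP by (simp add: rw_snoc tt fwords_def)
  next
    case False
    have v': "v' \<in> fwords P" using snoc False by (auto simp: fwords_def)
    have i: "rw th (u @ v') \<in> P" "rw th v' \<in> P" using rw_in v' snoc by (auto simp: fwords_def)
    have "th (rw th (u @ v')) (rw th v') = rw th (u @ v')" using snoc.IH[OF v' snoc.prems(2)] .
    then show ?thesis using False i uP snoc.prems(2) rw_snoc[of "u @ v'" th q] rw_snoc[of v' th q]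
      by (simp add: LC' fwords_def)
  qed
qed (simp add: fwords_def)

lemma ball_carrier: "(\<forall>c\<in>fcarrier P th de. Q c) \<longleftrightarrow> (\<forall>w\<in>fwords P. Q (fclass P th de w))"
  using fcarrier_iff class_in by metis

lemma sing_words: "p \<in> P \<Longrightarrow> [p] \<in> fwords P" by (simp add: fwords_def)

lemma fw_Cons: "x # v \<in> fwords P \<longleftrightarrow> x \<in> P \<and> v \<in> lists P" by (simp add: fwords_def)

lemma dw_inw: "w \<in> fwords P \<Longrightarrow> dw de w \<in> P" using dw_in by (simp add: fwords_def)
lemma rw_inw: "w \<in> fwords P \<Longrightarrow> rw th w \<in> P" using rw_in by (simp add: fwords_def)

lemma drc_F: "drc (fcarrier P th de) (fmult P th de) (fD P th de) (fR P th de)"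
  unfolding drc_def ball_carrier
proof (intro conjI ballI)
  fix a b c assume w: "a \<in> fwords P" "b \<in> fwords P" "c \<in> fwords P"
  note simps = fmult_class fD_class fR_class fwords_app sing_words dw_inw rw_inw w fw_Cons
  show "fmult P th de (fclass P th de a) (fclass P th de b) \<in> fcarrier P th de"
    by (simp add: simps class_in)
  show "fmult P th de (fmult P th de (fclass P th de a) (fclass P th de b)) (fclass P th de c) =
        fmult P th de (fclass P th de a) (fmult P th de (fclass P th de b) (fclass P th de c))"
    by (simp add: simps)
  show "fD P th de (fmult P th de (fclass P th de a) (fclass P th de b)) =
        fD P th de (fmult P th de (fclass P th de a) (fD P th de (fclass P th de b)))"
  proof -
    have bn: "b \<noteq> []" using w(2) by (simp add: fwords_def)
    show ?thesis using dw_app[of b de a] dw_app[of "[dw de b]" de a] bn by (simp add: simps)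
  qed
  show "fR P th de (fmult P th de (fclass P th de a) (fclass P th de b)) =
        fR P th de (fmult P th de (fR P th de (fclass P th de a)) (fclass P th de b))"
  proof -
    have an: "a \<noteq> []" using w(1) by (simp add: fwords_def)
    have rb: "rw th a # b \<in> fwords P" using w rw_inw[OF w(1)] by (simp add: fwords_def)
    show ?thesis using rw_app[of a th b] an rb by (simp add: simps)
  qed
  show "fD P th de (fmult P th de (fclass P th de a) (fclass P th de b)) =
    fmult P th de (fmult P th de (fD P th de (fclass P th de a)) (fD P th de (fmult P th de (fclass P th de a) (fclass P th de b))))
     (fD P th de (fclass P th de a))"
    using sandwich[of "dw de (a @ b)" "dw de a"] dw_le[of a b] class_eq[of "[dw de a, dw de (a @ b), dw de a]" "[dw de (a @ b)]"]
    by (simp add: simps)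
  show "fR P th de (fmult P th de (fclass P th de a) (fclass P th de b)) =
    fmult P th de (fmult P th de (fR P th de (fclass P th de b)) (fR P th de (fmult P th de (fclass P th de a) (fclass P th de b))))
     (fR P th de (fclass P th de b))"
    using sandwich[of "rw th (a @ b)" "rw th b"] rw_le[of b a] a5(1)[of "rw th b" "rw th (a @ b)"]
       class_eq[of "[rw th b, rw th (a @ b), rw th b]" "[rw th (a @ b)]"]
    by (simp add: simps)
next
  fix a assume w: "a \<in> fwords P"
  note simps = fmult_class fD_class fR_class fwords_app sing_words dw_inw rw_inw w fw_Cons
  show "fD P th de (fclass P th de a) \<in> fcarrier P th de" "fR P th de (fclass P th de a) \<in> fcarrier P th de"
    by (simp_all add: simps class_in)
  show "fmult P th de (fD P th de (fclass P th de a)) (fclass P th de a) = fclass P th de a"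
    using class_eq[OF dw_absorb[OF w]] by (simp add: simps)
  show "fmult P th de (fclass P th de a) (fR P th de (fclass P th de a)) = fclass P th de a"
    using class_eq[OF rw_absorb[OF w]] by (simp add: simps)
  show "fR P th de (fD P th de (fclass P th de a)) = fD P th de (fclass P th de a)"
    "fD P th de (fR P th de (fclass P th de a)) = fR P th de (fclass P th de a)"
    by (simp_all add: simps)
qed


lemma map_fcong: assumes f: "pa_morph P th de P' th' de' f"
  shows "(u,v) \<in> fcong P th de \<Longrightarrow> (map f u, map f v) \<in> fcong P' th' de'"
proof (induction rule: fcong.induct)
  have fP: "\<And>p. p \<in> P \<Longrightarrow> f p \<in> P'" using f by (simp add: pa_morph_def)
  have ml: "\<And>w. w \<in> lists P \<Longrightarrow> map f w \<in> lists P'" using fP by auto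
  have fth: "\<And>p q. p \<in> P \<Longrightarrow> q \<in> P \<Longrightarrow> f (th p q) = th' (f p) (f q)"
   and fde: "\<And>p q. p \<in> P \<Longrightarrow> q \<in> P \<Longrightarrow> f (de q p) = de' (f q) (f p)" using f by (auto simp: pa_morph_def)
  {
    case (refl w) then show ?case using ml by (auto intro!: fcong.refl)
  next
    case (sym u v) then show ?case by (auto intro: fcong.sym)
  next
    case (trans u v w) then show ?case by (auto intro: fcong.trans)
  next
    case (idem u v p) then show ?case using fcong.idem[of "map f u" P' "map f v" "f p"] ml fP by auto
  next
    case (rth u v p q) then show ?case using fcong.rth[of "map f u" P' "map f v" "f p" "f q"] ml fP fth by auto
  next
    case (rde u v p q) then show ?case using fcong.rde[of "map f u" P' "map f v" "f p" "f q"] ml fP fde by auto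
  }
qed

lemma dw_map: assumes f: "pa_morph P th de P' th' de' f"
  shows "w \<in> fwords P \<Longrightarrow> dw de' (map f w) = f (dw de w)"
proof (induction w)
  case (Cons a v)
  show ?case
  proof (cases "v = []")
    case False
    then have "v \<in> fwords P" "a \<in> P" using Cons by (auto simp: fwords_def)
    then show ?thesis using Cons False dw_inw f by (simp add: dw_Cons pa_morph_def)
  qed simp
qed (simp add: fwords_def)

lemma foldl_map: assumes f: "pa_morph P th de P' th' de' f"
  shows "v \<in> lists P \<Longrightarrow> x \<in> P \<Longrightarrow> foldl th' (f x) (map f v) = f (foldl th x v)"
proof (induction v arbitrary: x)
  case (Cons a v)
  have "f (th x a) = th' (f x) (f a)" using f Cons.prems by (simp add: pa_morph_def)
  then show ?case using Cons.IH[of "th x a"] Cons.prems cl by simp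
qed simp

lemma rw_map: assumes f: "pa_morph P th de P' th' de' f"
  shows "w \<in> fwords P \<Longrightarrow> rw th' (map f w) = f (rw th w)"
  by (cases w) (auto simp: fwords_def foldl_map[OF f])

lemma fmap_class: assumes f: "pa_morph P th de P' th' de' f" and w: "w \<in> fwords P"
  shows "fmap P' th' de' f (fclass P th de w) = fclass P' th' de' (map f w)"
proof
  show "fmap P' th' de' f (fclass P th de w) \<subseteq> fclass P' th' de' (map f w)"
  proof
    fix x assume "x \<in> fmap P' th' de' f (fclass P th de w)"
    then obtain w' where "(w, w') \<in> fcong P th de" "(map f w', x) \<in> fcong P' th' de'"
      unfolding fmap_def by (auto simp: class_mem)
    then have "(map f w, x) \<in> fcong P' th' de'" using map_fcong[OF f] by (meson fcong.trans)
    then show "x \<in> fclass P' th' de' (map f w)" by (simp add: fclass_def)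
  qed
next
  show "fclass P' th' de' (map f w) \<subseteq> fmap P' th' de' f (fclass P th de w)"
  proof
    fix x assume "x \<in> fclass P' th' de' (map f w)"
    then have 1: "(map f w, x) \<in> fcong P' th' de'" by (simp add: fclass_def)
    have "map f w \<in> map f ` fclass P th de w" using class_refl[OF w] by blast
    with 1 show "x \<in> fmap P' th' de' f (fclass P th de w)" unfolding fmap_def by blast
  qed
qed

lemma fmap_props: assumes PA': "proj_alg P' th' de'" and f: "pa_morph P th de P' th' de' f"
  shows "drc_morph (fcarrier P th de) (fmult P th de) (fD P th de) (fR P th de)
                   (fcarrier P' th' de') (fmult P' th' de') (fD P' th' de') (fR P' th' de')
                   (fmap P' th' de' f) \<and>
         (\<forall>w\<in>fwords P. fmap P' th' de' f (fclass P th de w) = fclass P' th' de' (map f w))"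
proof -
  interpret P': pa P' th' de' by (rule pa.intro[OF PA'])
  have fP: "\<And>p. p \<in> P \<Longrightarrow> f p \<in> P'" using f by (simp add: pa_morph_def)
  have mw: "\<And>w. w \<in> fwords P \<Longrightarrow> map f w \<in> fwords P'" using fP by (auto simp: fwords_def)
  note fc = fmap_class[OF f]
  show ?thesis unfolding drc_morph_def ball_carrier
  proof (intro conjI ballI)
    fix a b assume w: "a \<in> fwords P" "b \<in> fwords P"
    show "fmap P' th' de' f (fmult P th de (fclass P th de a) (fclass P th de b)) =
      fmult P' th' de' (fmap P' th' de' f (fclass P th de a)) (fmap P' th' de' f (fclass P th de b))"
      using w mw by (simp add: fc fmult_class P'.fmult_class fwords_app)
  next
    fix a assume w: "a \<in> fwords P"
    show "fmap P' th' de' f (fclass P th de a) \<in> fcarrier P' th' de'" using w mw fc P'.class_in by simp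
    show "fmap P' th' de' f (fD P th de (fclass P th de a)) = fD P' th' de' (fmap P' th' de' f (fclass P th de a))"
      using w mw dw_map[OF f w] by (simp add: fc fD_class P'.fD_class sing_words dw_inw)
    show "fmap P' th' de' f (fR P th de (fclass P th de a)) = fR P' th' de' (fmap P' th' de' f (fclass P th de a))"
      using w mw rw_map[OF f w] by (simp add: fc fR_class P'.fR_class sing_words rw_inw)
  next
    fix w assume "w \<in> fwords P" then show "fmap P' th' de' f (fclass P th de w) = fclass P' th' de' (map f w)"
      by (rule fc)
  qed
qed

lemma unit_morph: "pa_morph P th de (projs (fcarrier P th de) (fD P th de))
          (proj_th (fmult P th de) (fR P th de)) (proj_de (fmult P th de) (fD P th de))
          (\<lambda>p. fclass P th de [p])"
  unfolding pa_morph_def projs_def proj_th_def proj_de_def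
proof (intro conjI ballI)
  fix p assume p: "p \<in> P"
  have "fclass P th de [p] = fD P th de (fclass P th de [p])" using p by (simp add: fD_class sing_words)
  then show "fclass P th de [p] \<in> fD P th de ` fcarrier P th de" using class_in[OF sing_words[OF p]] by blast
next
  fix p q assume pq: "p \<in> P" "q \<in> P"
  show "fclass P th de [th q p] = fR P th de (fmult P th de (fclass P th de [q]) (fclass P th de [p]))"
    using pq by (simp add: fmult_class sing_words fR_class fw_Cons)
  show "fclass P th de [de q p] = fD P th de (fmult P th de (fclass P th de [p]) (fclass P th de [q]))"
    using pq by (simp add: fmult_class sing_words fD_class fw_Cons)
qed

lemma unit_bij: "bij_betw (\<lambda>p. fclass P th de [p]) P (projs (fcarrier P th de) (fD P th de))"
  unfolding bij_betw_def projs_def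
proof
  show "inj_on (\<lambda>p. fclass P th de [p]) P"
  proof
    fix p q assume pq: "p \<in> P" "q \<in> P" "fclass P th de [p] = fclass P th de [q]"
    then have "[q] \<in> fclass P th de [p]" using class_refl[OF sing_words[OF pq(2)]] by simp
    then have "([p], [q]) \<in> fcong P th de" by (simp add: class_mem)
    then show "p = q" using dw_inv by fastforce
  qed
  show "(\<lambda>p. fclass P th de [p]) ` P = fD P th de ` fcarrier P th de"
  proof
    show "(\<lambda>p. fclass P th de [p]) ` P \<subseteq> fD P th de ` fcarrier P th de"
    proof
      fix c assume "c \<in> (\<lambda>p. fclass P th de [p]) ` P"
      then obtain p where p: "p \<in> P" "c = fclass P th de [p]" by blast
      have "c = fD P th de (fclass P th de [p])" using p by (simp add: fD_class sing_words)
      then show "c \<in> fD P th de ` fcarrier P th de" using class_in[OF sing_words[OF p(1)]] by blast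
    qed
    show "fD P th de ` fcarrier P th de \<subseteq> (\<lambda>p. fclass P th de [p]) ` P"
    proof
      fix c assume "c \<in> fD P th de ` fcarrier P th de"
      then obtain c' where c': "c' \<in> fcarrier P th de" "c = fD P th de c'" by blast
      obtain w where w: "w \<in> fwords P" "c' = fclass P th de w" using fcarrier_iff[THEN iffD1, OF c'(1)] by blast
      have "c = fclass P th de [dw de w]" using fD_class[OF w(1)] c'(2) w(2) by simp
      then show "c \<in> (\<lambda>p. fclass P th de [p]) ` P" using dw_inw[OF w(1)] by (rule image_eqI)
    qed
  qed
qed

end


locale dr = fixes S m D R assumes DRC: "drc S m D R"
begin
lemma ax: "(\<forall>a\<in>S. \<forall>b\<in>S. m a b \<in> S)" "(\<forall>a\<in>S. D a \<in> S \<and> R a \<in> S)"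
  "(\<forall>a\<in>S. \<forall>b\<in>S. \<forall>c\<in>S. m (m a b) c = m a (m b c))"
  "(\<forall>a\<in>S. m (D a) a = a \<and> m a (R a) = a)"
  "(\<forall>a\<in>S. \<forall>b\<in>S. D (m a b) = D (m a (D b)) \<and> R (m a b) = R (m (R a) b))"
  "(\<forall>a\<in>S. \<forall>b\<in>S. D (m a b) = m (m (D a) (D (m a b))) (D a) \<and> R (m a b) = m (m (R b) (R (m a b))) (R b))"
  "(\<forall>a\<in>S. R (D a) = D a \<and> D (R a) = R a)"
  using DRC unfolding drc_def by blast+
lemma cl1: "a\<in>S \<Longrightarrow> b\<in>S \<Longrightarrow> m a b \<in> S" using ax(1)[rule_format] .
lemma cl2: "a\<in>S \<Longrightarrow> D a \<in> S" using conjunct1[OF ax(2)[rule_format]] .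
lemma cl3: "a\<in>S \<Longrightarrow> R a \<in> S" using conjunct2[OF ax(2)[rule_format]] .
lemmas cl = cl1 cl2 cl3
lemma as: "a\<in>S \<Longrightarrow> b\<in>S \<Longrightarrow> c\<in>S \<Longrightarrow> m (m a b) c = m a (m b c)" using ax(3)[rule_format] .
lemma b1_1: "a\<in>S \<Longrightarrow> m (D a) a = a" using conjunct1[OF ax(4)[rule_format]] .
lemma b1_2: "a\<in>S \<Longrightarrow> m a (R a) = a" using conjunct2[OF ax(4)[rule_format]] .
lemmas b1 = b1_1 b1_2
lemma b2_1: "a\<in>S \<Longrightarrow> b\<in>S \<Longrightarrow> D (m a b) = D (m a (D b))" using conjunct1[OF ax(5)[rule_format]] .
lemma b2_2: "a\<in>S \<Longrightarrow> b\<in>S \<Longrightarrow> R (m a b) = R (m (R a) b)" using conjunct2[OF ax(5)[rule_format]] .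
lemmas b2 = b2_1 b2_2
lemma b3_1: "a\<in>S \<Longrightarrow> b\<in>S \<Longrightarrow> D (m a b) = m (m (D a) (D (m a b))) (D a)" using conjunct1[OF ax(6)[rule_format]] .
lemma b3_2: "a\<in>S \<Longrightarrow> b\<in>S \<Longrightarrow> R (m a b) = m (m (R b) (R (m a b))) (R b)" using conjunct2[OF ax(6)[rule_format]] .
lemmas b3 = b3_1 b3_2
lemma b4_1: "a\<in>S \<Longrightarrow> R (D a) = D a" using conjunct1[OF ax(7)[rule_format]] .
lemma b4_2: "a\<in>S \<Longrightarrow> D (R a) = R a" using conjunct2[OF ax(7)[rule_format]] .
lemmas b4 = b4_1 b4_2
lemma DD: "a\<in>S \<Longrightarrow> D (D a) = D a"
proof -
  assume a: "a \<in> S"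
  have "D (D a) = D (R (D a))" using b4_1[OF a] by simp
  also have "\<dots> = R (D a)" using b4_2[OF cl2[OF a]] .
  also have "\<dots> = D a" using b4_1[OF a] .
  finally show ?thesis .
qed
lemma RR: "a\<in>S \<Longrightarrow> R (R a) = R a"
proof -
  assume a: "a \<in> S"
  have "R (R a) = R (D (R a))" using b4_2[OF a] by simp
  also have "\<dots> = D (R a)" using b4_1[OF cl3[OF a]] .
  also have "\<dots> = R a" using b4_2[OF a] .
  finally show ?thesis .
qed
lemma pp: "p\<in>S \<Longrightarrow> D p = p \<Longrightarrow> m p p = p" using b1_1[of p] by simp
lemma pR: "p\<in>S \<Longrightarrow> D p = p \<Longrightarrow> R p = p" using b4_1[of p] by simp

lemma proj_char: "p \<in> projs S D \<longleftrightarrow> p \<in> S \<and> D p = p"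
proof
  assume "p \<in> projs S D"
  then obtain a where "a \<in> S" "p = D a" by (auto simp: projs_def)
  then show "p \<in> S \<and> D p = p" using DD cl by simp
next
  assume "p \<in> S \<and> D p = p"
  then show "p \<in> projs S D" unfolding projs_def by (metis image_eqI)
qed

lemma sandw: assumes r: "r \<in> S" and p: "p \<in> S" "m p p = p" and e: "r = m (m p r) p"
  shows "m p r = r" "m r p = r"
proof -
  have ppx: "\<And>x. x \<in> S \<Longrightarrow> m p (m p x) = m p x" using as[of p p] p by simp
  have "m p r = m p (m (m p r) p)" by (simp only: e[symmetric])
  also have "\<dots> = m (m p r) p" using r p cl ppx by (simp add: as)
  also have "\<dots> = r" using e[symmetric] by (simp only:)
  finally show "m p r = r" .
  have "m r p = m (m (m p r) p) p" by (simp only: e[symmetric])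
  also have "\<dots> = m (m p r) p" using r p cl by (simp add: as)
  also have "\<dots> = r" using e[symmetric] by (simp only:)
  finally show "m r p = r" .
qed
lemma RlRr: assumes "a\<in>S" "p\<in>S" "D p = p" shows "m p (R (m a p)) = R (m a p)" "m (R (m a p)) p = R (m a p)"
proof -
  have e: "R (m a p) = m (m p (R (m a p))) p" using b3(2)[OF assms(1,2)] unfolding pR[OF assms(2,3)] .
  show "m p (R (m a p)) = R (m a p)" "m (R (m a p)) p = R (m a p)"
    using sandw[OF cl(3)[OF cl(1)[OF assms(1,2)]] assms(2) pp[OF assms(2,3)] e] by auto
qed
lemma DlDr: assumes "a\<in>S" "p\<in>S" "D p = p" shows "m p (D (m p a)) = D (m p a)" "m (D (m p a)) p = D (m p a)"
proof -
  have e: "D (m p a) = m (m p (D (m p a))) p" using b3(1)[OF assms(2,1)] unfolding assms(3) .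
  show "m p (D (m p a)) = D (m p a)" "m (D (m p a)) p = D (m p a)"
    using sandw[OF cl(2)[OF cl(1)[OF assms(2,1)]] assms(2) pp[OF assms(2,3)] e] by auto
qed
lemmas Rl = RlRr(1) and Rr = RlRr(2) and Dl = DlDr(1) and Dr = DlDr(2)
lemma g: "p\<in>S \<Longrightarrow> q\<in>S \<Longrightarrow> D q = q \<Longrightarrow> m p (R (m p q)) = m p q"
proof -
  assume h: "p\<in>S" "q\<in>S" "D q = q"
  have "m p q = m (m p q) (R (m p q))" using b1(2) h cl by simp
  also have "\<dots> = m p (m q (R (m p q)))" using h cl by (simp add: as)
  also have "\<dots> = m p (R (m p q))" using Rl[OF h(1) h(2,3)] by simp
  finally show ?thesis by simp
qed
lemma h: "p\<in>S \<Longrightarrow> D p = p \<Longrightarrow> q\<in>S \<Longrightarrow> m (D (m p q)) q = m p q"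
proof -
  assume h: "p\<in>S" "D p = p" "q\<in>S"
  have "m p q = m (D (m p q)) (m p q)" using b1(1) h cl by simp
  also have "\<dots> = m (m (D (m p q)) p) q" using h cl by (simp add: as)
  also have "\<dots> = m (D (m p q)) q" using Dr[OF h(3) h(1,2)] by simp
  finally show ?thesis by simp
qed

lemma pa_c1: "x \<in> S \<Longrightarrow> p \<in> S \<Longrightarrow> R (m x p) \<in> S \<and> D (R (m x p)) = R (m x p)" using cl b4 by auto
lemma pa_c2: "x \<in> S \<Longrightarrow> p \<in> S \<Longrightarrow> D (m p x) \<in> S \<and> D (D (m p x)) = D (m p x)" using cl DD by auto
lemma pa_3: assumes x: "x \<in> S" "D x = x" and p: "p \<in> S" "D p = p" and q: "q \<in> S" "D q = q"
  shows "R (m (R (m x q)) (R (m q p))) = R (m (R (m x q)) p)"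
proof -
  note c = cl[of x] cl[of p] cl[of q] x p q
  have "m (R (m x q)) (R (m q p)) = m (m (R (m x q)) q) (R (m q p))" using Rr c by simp
  also have "\<dots> = m (R (m x q)) (m q (R (m q p)))" using c cl by (simp add: as)
  also have "\<dots> = m (R (m x q)) (m q p)" using g c by simp
  also have "\<dots> = m (m (R (m x q)) q) p" using c cl by (simp add: as)
  also have "\<dots> = m (R (m x q)) p" using Rr c by simp
  finally show ?thesis by simp
qed
lemma pa_4: assumes x: "x \<in> S" "D x = x" and p: "p \<in> S" "D p = p" and q: "q \<in> S" "D q = q"
  shows "D (m (D (m p q)) (D (m q x))) = D (m p (D (m q x)))"
proof -
  note c = cl[of x] cl[of p] cl[of q] x p q
  have "m (D (m p q)) (D (m q x)) = m (D (m p q)) (m q (D (m q x)))" using Dl c by simp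
  also have "\<dots> = m (m (D (m p q)) q) (D (m q x))" using c cl by (simp add: as)
  also have "\<dots> = m (m p q) (D (m q x))" using h c by simp
  also have "\<dots> = m p (m q (D (m q x)))" using c cl by (simp add: as)
  also have "\<dots> = m p (D (m q x))" using Dl c by simp
  finally show ?thesis by simp
qed
lemma pa_5: assumes x: "x \<in> S" "D x = x" and p: "p \<in> S" "D p = p"
  shows "D (m p (R (m x p))) = R (m x p) \<and> R (m (D (m p x)) p) = D (m p x)"
  using Rl Dr x p cl b4 by simp
lemma pa_6: assumes x: "x \<in> S" "D x = x" and p: "p \<in> S" "D p = p" and q: "q \<in> S" "D q = q"
  shows "R (m (R (m x (D (m q p)))) p) = R (m (R (m x q)) p)"
proof -
  note c = cl[of x] cl[of p] cl[of q] x p q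
  have "R (m (R (m x (D (m q p)))) p) = R (m (m x (D (m q p))) p)" using b2(2)[of "m x (D (m q p))" p] c cl by simp
  also have "\<dots> = R (m x (m (D (m q p)) p))" using c cl by (simp add: as)
  also have "\<dots> = R (m x (m q p))" using h c by simp
  also have "\<dots> = R (m (m x q) p)" using c cl by (simp add: as)
  also have "\<dots> = R (m (R (m x q)) p)" using b2(2)[of "m x q" p] c cl by simp
  finally show ?thesis .
qed
lemma pa_7: assumes x: "x \<in> S" "D x = x" and p: "p \<in> S" "D p = p" and q: "q \<in> S" "D q = q"
  shows "D (m p (D (m (R (m p q)) x))) = D (m p (D (m q x)))"
proof -
  note c = cl[of x] cl[of p] cl[of q] x p q
  have "D (m p (D (m (R (m p q)) x))) = D (m p (m (R (m p q)) x))" using b2(1)[of p "m (R (m p q)) x"] c cl by simp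
  also have "\<dots> = D (m (m p (R (m p q))) x)" using c cl by (simp add: as)
  also have "\<dots> = D (m (m p q) x)" using g c by simp
  also have "\<dots> = D (m p (m q x))" using c cl by (simp add: as)
  also have "\<dots> = D (m p (D (m q x)))" using b2(1)[of p "m q x"] c cl by simp
  finally show ?thesis .
qed
lemma pa_1: "p \<in> S \<Longrightarrow> D p = p \<Longrightarrow> R (m p p) = p \<and> D (m p p) = p" using pp pR by simp
lemma pa_2: "p \<in> S \<Longrightarrow> D p = p \<Longrightarrow> q \<in> S \<Longrightarrow> D q = q \<Longrightarrow>
   R (m p (R (m q p))) = R (m q p) \<and> D (m (D (m p q)) p) = D (m p q)"
  using Rl Dr cl RR DD by simp

lemma proj_pa: "proj_alg (projs S D) (proj_th m R) (proj_de m D)"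
  unfolding proj_alg_def proj_th_def proj_de_def
proof (intro conjI ballI)
  fix x p q assume x: "x \<in> projs S D" and p: "p \<in> projs S D" and q: "q \<in> projs S D"
  have x': "x \<in> S" "D x = x" and p': "p \<in> S" "D p = p" and q': "q \<in> S" "D q = q"
    using x p q proj_char by auto
  show "R (m x p) \<in> projs S D" using pa_c1[OF x'(1) p'(1)] proj_char by blast
  show "D (m p x) \<in> projs S D" using pa_c2[OF x'(1) p'(1)] proj_char by blast
  show "R (m (R (m x q)) (R (m q p))) = R (m (R (m x q)) p)" by (rule pa_3[OF x' p' q'])
  show "D (m (D (m p q)) (D (m q x))) = D (m p (D (m q x)))" by (rule pa_4[OF x' p' q'])
  show "D (m p (R (m x p))) = R (m x p)" using pa_5[OF x' p'] by blast
  show "R (m (D (m p x)) p) = D (m p x)" using pa_5[OF x' p'] by blast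
  show "R (m (R (m x (D (m q p)))) p) = R (m (R (m x q)) p)" by (rule pa_6[OF x' p' q'])
  show "D (m p (D (m (R (m p q)) x))) = D (m p (D (m q x)))" by (rule pa_7[OF x' p' q'])
next
  fix p assume p: "p \<in> projs S D"
  have p': "p \<in> S" "D p = p" using p proj_char by auto
  show "R (m p p) = p" "D (m p p) = p" using pa_1[OF p'] by blast+
next
  fix p q assume p: "p \<in> projs S D" and q: "q \<in> projs S D"
  have p': "p \<in> S" "D p = p" and q': "q \<in> S" "D q = q" using p q proj_char by auto
  show "R (m p (R (m q p))) = R (m q p)" "D (m (D (m p q)) p) = D (m p q)" using pa_2[OF p' q'] by blast+
qed
end

lemma drc_morph_pa: assumes "drc S m D R" "drc S' m' D' R'" "drc_morph S m D R S' m' D' R' g"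
  shows "pa_morph (projs S D) (proj_th m R) (proj_de m D) (projs S' D') (proj_th m' R') (proj_de m' D') g"
proof -
  interpret A: dr S m D R by (rule dr.intro) fact
  interpret B: dr S' m' D' R' by (rule dr.intro) fact
  have g: "\<And>a. a \<in> S \<Longrightarrow> g a \<in> S'" "\<And>a b. a \<in> S \<Longrightarrow> b \<in> S \<Longrightarrow> g (m a b) = m' (g a) (g b)"
    "\<And>a. a \<in> S \<Longrightarrow> g (D a) = D' (g a)" "\<And>a. a \<in> S \<Longrightarrow> g (R a) = R' (g a)"
    using assms(3) unfolding drc_morph_def by auto
  have gp: "\<And>p. p \<in> S \<Longrightarrow> D p = p \<Longrightarrow> g p \<in> S' \<and> D' (g p) = g p" using g by metis
  show ?thesis unfolding pa_morph_def proj_th_def proj_de_def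
  proof (intro conjI ballI)
    fix p assume "p \<in> projs S D"
    then show "g p \<in> projs S' D'" using A.proj_char B.proj_char gp by blast
  next
    fix p q assume "p \<in> projs S D" "q \<in> projs S D"
    then have pq: "p \<in> S" "q \<in> S" using A.proj_char by auto
    show "g (R (m q p)) = R' (m' (g q) (g p))" using pq g(2,4) A.cl by simp
    show "g (D (m p q)) = D' (m' (g p) (g q))" using pq g(2,3) A.cl by simp
  qed
qed


context pa begin
lemmas pcl = cl
end

fun ev :: "('b \<Rightarrow> 'b \<Rightarrow> 'b) \<Rightarrow> ('a \<Rightarrow> 'b) \<Rightarrow> 'a list \<Rightarrow> 'b" where
  "ev m f [] = undefined" | "ev m f [p] = f p" | "ev m f (p # q # v) = m (f p) (ev m f (q # v))"

lemma ev_Cons: "v \<noteq> [] \<Longrightarrow> ev m f (p # v) = m (f p) (ev m f v)"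
  by (cases v) auto

locale padr = pa P th de + dr S m D R for P th de and S :: "'b set" and m D R +
  fixes f :: "'a \<Rightarrow> 'b"
  assumes fm: "pa_morph P th de (projs S D) (proj_th m R) (proj_de m D) f"
begin

lemma fP: "p \<in> P \<Longrightarrow> f p \<in> S" "p \<in> P \<Longrightarrow> D (f p) = f p"
  using fm proj_char unfolding pa_morph_def by auto

lemma fth: "p \<in> P \<Longrightarrow> q \<in> P \<Longrightarrow> f (th q p) = R (m (f q) (f p))"
  and fde: "p \<in> P \<Longrightarrow> q \<in> P \<Longrightarrow> f (de q p) = D (m (f p) (f q))"
  using fm unfolding pa_morph_def proj_th_def proj_de_def by auto

lemma ev_in: "w \<in> fwords P \<Longrightarrow> ev m f w \<in> S"
proof (induction w)
  case (Cons a v)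
  show ?case
  proof (cases "v = []")
    case True then show ?thesis using Cons fP by (simp add: fwords_def)
  next
    case False then show ?thesis using Cons fP cl by (simp add: ev_Cons fwords_def)
  qed
qed (simp add: fwords_def)

lemma ev_app: "u \<in> fwords P \<Longrightarrow> v \<in> fwords P \<Longrightarrow> ev m f (u @ v) = m (ev m f u) (ev m f v)"
proof (induction u)
  case (Cons a u')
  show ?case
  proof (cases "u' = []")
    case True then show ?thesis using Cons by (simp add: ev_Cons fwords_def)
  next
    case False
    have u': "u' \<in> fwords P" "a \<in> P" using Cons False by (auto simp: fwords_def)
    have "ev m f ((a # u') @ v) = m (f a) (ev m f (u' @ v))" using Cons.prems by (simp add: ev_Cons fwords_def)
    also have "\<dots> = m (f a) (m (ev m f u') (ev m f v))" using Cons.IH[OF u'(1) Cons.prems(2)] by simp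
    also have "\<dots> = m (m (f a) (ev m f u')) (ev m f v)" using as fP u' ev_in Cons.prems by simp
    also have "\<dots> = m (ev m f (a # u')) (ev m f v)" using False by (simp add: ev_Cons)
    finally show ?thesis .
  qed
qed (simp add: fwords_def)

lemma ev_loc: assumes "u \<in> lists P" "x \<in> fwords P" "y \<in> fwords P" "v \<in> lists P" "ev m f x = ev m f y"
  shows "ev m f (u @ x @ v) = ev m f (u @ y @ v)"
proof -
  have xv: "ev m f (x @ v) = ev m f (y @ v)"
  proof (cases "v = []")
    case False
    then have "v \<in> fwords P" using assms by (simp add: fwords_def)
    then show ?thesis using assms ev_app by simp
  qed (simp add: assms)
  show ?thesis
  proof (cases "u = []")
    case False
    then have "u \<in> fwords P" using assms by (simp add: fwords_def)
    then show ?thesis using assms xv ev_app[of u "x @ v"] ev_app[of u "y @ v"] fwords_app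
      by (simp add: fwords_def)
  qed (simp add: xv)
qed

lemma ev_inv: "(u, v) \<in> fcong P th de \<Longrightarrow> ev m f u = ev m f v"
proof (induction rule: fcong.induct)
  case (idem u v p) then show ?case using fP pp by (intro ev_loc) (auto simp: fwords_def)
next
  case (rth u v p q) then show ?case using fP g fth pcl by (intro ev_loc) (auto simp: fwords_def pcl)
next
  case (rde u v p q) then show ?case using fP h fde pcl by (intro ev_loc) (auto simp: fwords_def pcl)
qed auto

lemma ev_D: "w \<in> fwords P \<Longrightarrow> D (ev m f w) = f (dw de w)"
proof (induction w)
  case (Cons a v)
  show ?case
  proof (cases "v = []")
    case True then show ?thesis using Cons fP by (simp add: fwords_def)
  next
    case False
    have v: "v \<in> fwords P" "a \<in> P" using Cons False by (auto simp: fwords_def)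
    have "D (ev m f (a # v)) = D (m (f a) (ev m f v))" using False by (simp add: ev_Cons)
    also have "\<dots> = D (m (f a) (D (ev m f v)))" using b2_1[of "f a" "ev m f v"] fP v ev_in by simp
    also have "\<dots> = D (m (f a) (f (dw de v)))" using Cons.IH[OF v(1)] by simp
    also have "\<dots> = f (de (dw de v) a)" using fde[of a "dw de v"] v dw_inw by simp
    also have "\<dots> = f (dw de (a # v))" using False by (simp add: dw_Cons)
    finally show ?thesis .
  qed
qed (simp add: fwords_def)

lemma ev_R: "w \<in> fwords P \<Longrightarrow> R (ev m f w) = f (rw th w)"
proof (induction w rule: rev_induct)
  case (snoc a v)
  show ?case
  proof (cases "v = []")
    case True then show ?thesis using snoc fP pR by (simp add: fwords_def)
  next
    case False
    have v: "v \<in> fwords P" "a \<in> P" using snoc False by (auto simp: fwords_def)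
    have "R (ev m f (v @ [a])) = R (m (ev m f v) (f a))" using ev_app[of v "[a]"] v by (simp add: fwords_def)
    also have "\<dots> = R (m (R (ev m f v)) (f a))" using b2_2[of "ev m f v" "f a"] fP v ev_in by simp
    also have "\<dots> = R (m (f (rw th v)) (f a))" using snoc.IH[OF v(1)] by simp
    also have "\<dots> = f (th (rw th v) a)" using fth[of a "rw th v"] v rw_inw by simp
    also have "\<dots> = f (rw th (v @ [a]))" using False by (simp add: rw_snoc)
    finally show ?thesis .
  qed
qed (simp add: fwords_def)

definition G where "G c = ev m f (SOME w. w \<in> c)"

lemma G_class: assumes w: "w \<in> fwords P" shows "G (fclass P th de w) = ev m f w"
proof -
  have "(SOME w'. w' \<in> fclass P th de w) \<in> fclass P th de w" using class_refl[OF w] by (rule someI)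
  then have "(w, SOME w'. w' \<in> fclass P th de w) \<in> fcong P th de" by (simp add: class_mem)
  then show ?thesis unfolding G_def using ev_inv by metis
qed

lemma G_morph: "drc_morph (fcarrier P th de) (fmult P th de) (fD P th de) (fR P th de) S m D R G"
  unfolding drc_morph_def ball_carrier
proof (intro conjI ballI)
  fix a b assume w: "a \<in> fwords P" "b \<in> fwords P"
  show "G (fmult P th de (fclass P th de a) (fclass P th de b)) = m (G (fclass P th de a)) (G (fclass P th de b))"
    using w by (simp add: fmult_class G_class fwords_app ev_app)
next
  fix a assume w: "a \<in> fwords P"
  show "G (fclass P th de a) \<in> S" using w by (simp add: G_class ev_in)
  show "G (fD P th de (fclass P th de a)) = D (G (fclass P th de a))"
    using w by (simp add: G_class fD_class sing_words dw_inw ev_D)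
  show "G (fR P th de (fclass P th de a)) = R (G (fclass P th de a))"
    using w by (simp add: G_class fR_class sing_words rw_inw ev_R)
qed

lemma G_unit: "p \<in> P \<Longrightarrow> G (fclass P th de [p]) = f p"
  by (simp add: G_class sing_words)

end

context pa begin
lemma morph_det: assumes g1: "drc_morph (fcarrier P th de) (fmult P th de) (fD P th de) (fR P th de) S m D R g1"
  and g2: "drc_morph (fcarrier P th de) (fmult P th de) (fD P th de) (fR P th de) S m D R g2"
  and e: "\<forall>p\<in>P. g1 (fclass P th de [p]) = g2 (fclass P th de [p])"
  shows "w \<in> fwords P \<Longrightarrow> g1 (fclass P th de w) = g2 (fclass P th de w)"
proof (induction w)
  case (Cons a v)
  show ?case
  proof (cases "v = []")
    case True then show ?thesis using Cons e by (simp add: fwords_def)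
  next
    case False
    have v: "v \<in> fwords P" "a \<in> P" using Cons False by (auto simp: fwords_def)
    have c: "fclass P th de (a # v) = fmult P th de (fclass P th de [a]) (fclass P th de v)"
      using fmult_class[of "[a]" v] v sing_words by simp
    have i: "fclass P th de [a] \<in> fcarrier P th de" "fclass P th de v \<in> fcarrier P th de"
      using class_in v sing_words by auto
    have m1: "g1 (fclass P th de (a # v)) = m (g1 (fclass P th de [a])) (g1 (fclass P th de v))"
      using g1 i c unfolding drc_morph_def by simp
    have m2: "g2 (fclass P th de (a # v)) = m (g2 (fclass P th de [a])) (g2 (fclass P th de v))"
      using g2 i c unfolding drc_morph_def by simp
    show ?thesis using m1 m2 Cons.IH[OF v(1)] e v by simp
  qed
qed (simp add: fwords_def)

lemma morph_det2: assumes "drc_morph (fcarrier P th de) (fmult P th de) (fD P th de) (fR P th de) S m D R g1"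
  and "drc_morph (fcarrier P th de) (fmult P th de) (fD P th de) (fR P th de) S m D R g2"
  and "\<forall>p\<in>P. g1 (fclass P th de [p]) = g2 (fclass P th de [p])"
  shows "\<forall>c\<in>fcarrier P th de. g1 c = g2 c"
  unfolding ball_carrier using morph_det[OF assms] by blast
end



theorem theorem8p13:
  fixes P :: "'a set" and th de :: "'a \<Rightarrow> 'a \<Rightarrow> 'a"
  assumes PA: "proj_alg P th de"
  shows
    \<comment> \<open>F(P) is a DRC-semigroup\<close>
    "drc (fcarrier P th de) (fmult P th de) (fD P th de) (fR P th de) \<and>
    \<comment> \<open>F is a functor on morphisms: F(phi) is a well-defined DRC-morphism acting letterwise\<close>
     (\<forall>(P' :: 'b set) th' de' f. proj_alg P' th' de' \<longrightarrow> pa_morph P th de P' th' de' f \<longrightarrow>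
         drc_morph (fcarrier P th de) (fmult P th de) (fD P th de) (fR P th de)
                   (fcarrier P' th' de') (fmult P' th' de') (fD P' th' de') (fR P' th' de')
                   (fmap P' th' de' f) \<and>
         (\<forall>w\<in>fwords P. fmap P' th' de' f (fclass P th de w) = fclass P' th' de' (map f w))) \<and>
    \<comment> \<open>P is a functor: P(S) is a projection algebra, restrictions of DRC-morphisms are PA-morphisms\<close>
     (\<forall>(S :: 'c set) m D R. drc S m D R \<longrightarrow>
         proj_alg (projs S D) (proj_th m R) (proj_de m D)) \<and>
     (\<forall>(S :: 'c set) m D R (S' :: 'd set) m' D' R' g. drc S m D R \<longrightarrow> drc S' m' D' R' \<longrightarrow>
         drc_morph S m D R S' m' D' R' g \<longrightarrow>
         pa_morph (projs S D) (proj_th m R) (proj_de m D)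
                  (projs S' D') (proj_th m' R') (proj_de m' D') g) \<and>
    \<comment> \<open>the unit p maps to the class of x_p is a PA-morphism P -> P(F(P))\<close>
     pa_morph P th de (projs (fcarrier P th de) (fD P th de))
          (proj_th (fmult P th de) (fR P th de)) (proj_de (fmult P th de) (fD P th de))
          (\<lambda>p. fclass P th de [p]) \<and>
    \<comment> \<open>universal property of the unit (F is left adjoint to P)\<close>
     (\<forall>(S :: 'c set) m D R f. drc S m D R \<longrightarrow>
         pa_morph P th de (projs S D) (proj_th m R) (proj_de m D) f \<longrightarrow>
         (\<exists>g. drc_morph (fcarrier P th de) (fmult P th de) (fD P th de) (fR P th de) S m D R g \<and>
              (\<forall>p\<in>P. g (fclass P th de [p]) = f p)) \<and>
         (\<forall>g1 g2. drc_morph (fcarrier P th de) (fmult P th de) (fD P th de) (fR P th de) S m D R g1 \<longrightarrow>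
                  drc_morph (fcarrier P th de) (fmult P th de) (fD P th de) (fR P th de) S m D R g2 \<longrightarrow>
                  (\<forall>p\<in>P. g1 (fclass P th de [p]) = g2 (fclass P th de [p])) \<longrightarrow>
                  (\<forall>c\<in>fcarrier P th de. g1 c = g2 c))) \<and>
    \<comment> \<open>coreflectivity: the unit is a bijective morphism, i.e. an isomorphism P = P(F(P))\<close>
     bij_betw (\<lambda>p. fclass P th de [p]) P (projs (fcarrier P th de) (fD P th de))"
proof -
  interpret pa P th de by (rule pa.intro[OF PA])
  have c1: "drc (fcarrier P th de) (fmult P th de) (fD P th de) (fR P th de)" by (rule drc_F)
  have c2: "\<forall>(P' :: 'b set) th' de' f. proj_alg P' th' de' \<longrightarrow> pa_morph P th de P' th' de' f \<longrightarrow>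
         drc_morph (fcarrier P th de) (fmult P th de) (fD P th de) (fR P th de)
                   (fcarrier P' th' de') (fmult P' th' de') (fD P' th' de') (fR P' th' de')
                   (fmap P' th' de' f) \<and>
         (\<forall>w\<in>fwords P. fmap P' th' de' f (fclass P th de w) = fclass P' th' de' (map f w))"
    using fmap_props by blast
  have c3: "\<forall>(S :: 'c set) m D R. drc S m D R \<longrightarrow> proj_alg (projs S D) (proj_th m R) (proj_de m D)"
    using dr.proj_pa dr.intro by blast
  have c4: "\<forall>(S :: 'c set) m D R (S' :: 'd set) m' D' R' g. drc S m D R \<longrightarrow> drc S' m' D' R' \<longrightarrow>
         drc_morph S m D R S' m' D' R' g \<longrightarrow>
         pa_morph (projs S D) (proj_th m R) (proj_de m D)
                  (projs S' D') (proj_th m' R') (proj_de m' D') g"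
    using drc_morph_pa by blast
  have c5: "pa_morph P th de (projs (fcarrier P th de) (fD P th de))
          (proj_th (fmult P th de) (fR P th de)) (proj_de (fmult P th de) (fD P th de))
          (\<lambda>p. fclass P th de [p])" by (rule unit_morph)
  have c6: "\<forall>(S :: 'c set) m D R f. drc S m D R \<longrightarrow>
         pa_morph P th de (projs S D) (proj_th m R) (proj_de m D) f \<longrightarrow>
         (\<exists>g. drc_morph (fcarrier P th de) (fmult P th de) (fD P th de) (fR P th de) S m D R g \<and>
              (\<forall>p\<in>P. g (fclass P th de [p]) = f p)) \<and>
         (\<forall>g1 g2. drc_morph (fcarrier P th de) (fmult P th de) (fD P th de) (fR P th de) S m D R g1 \<longrightarrow>
                  drc_morph (fcarrier P th de) (fmult P th de) (fD P th de) (fR P th de) S m D R g2 \<longrightarrow>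
                  (\<forall>p\<in>P. g1 (fclass P th de [p]) = g2 (fclass P th de [p])) \<longrightarrow>
                  (\<forall>c\<in>fcarrier P th de. g1 c = g2 c))"
  proof (intro allI impI conjI)
    fix S :: "'c set" and m D R f
    assume d: "drc S m D R" and fm: "pa_morph P th de (projs S D) (proj_th m R) (proj_de m D) f"
    interpret X: padr P th de S m D R f by (intro padr.intro pa.intro dr.intro padr_axioms.intro PA d fm)
    show "\<exists>g. drc_morph (fcarrier P th de) (fmult P th de) (fD P th de) (fR P th de) S m D R g \<and>
              (\<forall>p\<in>P. g (fclass P th de [p]) = f p)"
      using X.G_morph X.G_unit by blast
    fix g1 g2
    assume "drc_morph (fcarrier P th de) (fmult P th de) (fD P th de) (fR P th de) S m D R g1"
      "drc_morph (fcarrier P th de) (fmult P th de) (fD P th de) (fR P th de) S m D R g2"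
      "\<forall>p\<in>P. g1 (fclass P th de [p]) = g2 (fclass P th de [p])"
    then show "\<forall>c\<in>fcarrier P th de. g1 c = g2 c" by (rule morph_det2)
  qed
  have c7: "bij_betw (\<lambda>p. fclass P th de [p]) P (projs (fcarrier P th de) (fD P th de))" by (rule unit_bij)
  show ?thesis using c1 c2 c3 c4 c5 c6 c7 by (intro conjI) assumption+
qed


end
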